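(* For all positive integers $\alpha,\beta,p$, $C(\alpha,\beta,p)\leq C_{2D}(\alpha,\beta,p)$.
   Context: Memory cells are binary; there are $n$ cells and cell-state vectors lie in $\{0,1\}^n$. For a real $R\ge 0$ write $[1:2^{nR}]=\{1,2,\ldots,\lfloor 2^{nR}\rfloor\}$. A code on $n$ cells consists, for each write $i\ge 1$, of a real $R_i\ge 0$ (the individual rate), an encoder $\mathcal{E}_i:[1:2^{nR_i}]\times\{0,1\}^n\to\{0,1\}^n$ and a decoder $\mathcal{D}_i:\{0,1\}^n\to[1:2^{nR_i}]$ with $\mathcal{D}_i(\mathcal{E}_i(m,\mathbf{u}))=m$ for all $m,\mathbf{u}$ (the encoder and decoder may depend on the write index $i$). Starting from the all-zero state $\mathbf{v}_0=\mathbf{0}$, a message sequence $m_1,m_2,\ldots$ produces states $\mathbf{v}_i=\mathcal{E}_i(m_i,\mathbf{v}_{i-1})=(v_{i,1},\ldots,v_{i,n})$. The rewrite cost of a write is the Hamming distance between consecutive states. For positive integers $\alpha,\beta,p$, the code is $(\alpha,\beta,p)$-constrained if for every message sequence, every $i\ge 0$ and every $1\le j\le n-\beta+1$, $$\big|\{(k,\ell): v_{i+k,j+\ell}\neq v_{i+k+1,j+\ell},\ 0\le k<\alpha,\ 0\le \ell<\beta\}\big|\le p,$$ i.e. over any $\alpha$ consecutive rewrites and any $\beta$ contiguous cells the total rewrite cost is at most $p$. The rate of the code is $R=\lim_{m\to\infty}\frac1m\sum_{i=1}^m R_i$. $C_n(\alpha,\beta,p)$ is the supremum of rates of $(\alpha,\beta,p)$-constrained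 codes on $n$ cells, and the $(\alpha,\beta,p)$-capacity is $C(\alpha,\beta,p)=\lim_{n\to\infty}C_n(\alpha,\beta,p)$. An $m\times n$ binary array is an $(a,b,p)$-array if every $a\times b$ sub-array formed by $a$ consecutive rows and $b$ consecutive columns contains at most $p$ ones. If $c(m,n)$ is the number of $m\times n$ $(a,b,p)$-arrays, then $C_{2D}(a,b,p)=\lim_{m,n\to\infty}\frac{\log_2 c(m,n)}{mn}$. *)

theory Defs
  imports "HOL-Analysis.Analysis"
begin

(* Cells are indexed 0..n-1 (the paper uses 1..n); states are bool lists of length n. *)

definition msgs :: "nat \<Rightarrow> real \<Rightarrow> nat set" where
  "msgs n R = {1 .. nat \<lfloor>2 powr (real n * R)\<rfloor>}"

primrec states :: "nat \<Rightarrow> (nat \<Rightarrow> nat \<Rightarrow> bool list \<Rightarrow> bool list) \<Rightarrow> (nat \<Rightarrow> nat) \<Rightarrow> nat \<Rightarrow> bool list" where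
  "states n E ms 0 = replicate n False"
| "states n E ms (Suc i) = E (Suc i) (ms (Suc i)) (states n E ms i)"

definition is_code :: "nat \<Rightarrow> (nat \<Rightarrow> real) \<Rightarrow> (nat \<Rightarrow> nat \<Rightarrow> bool list \<Rightarrow> bool list)
    \<Rightarrow> (nat \<Rightarrow> bool list \<Rightarrow> nat) \<Rightarrow> bool" where
  "is_code n R E D \<longleftrightarrow>
     (\<forall>i\<ge>1. R i \<ge> 0 \<and>
        (\<forall>u. length u = n \<longrightarrow> D i u \<in> msgs n (R i)) \<and>
        (\<forall>m\<in>msgs n (R i). \<forall>u. length u = n \<longrightarrow>
            length (E i m u) = n \<and> D i (E i m u) = m))"

definition valid_msg_seq :: "nat \<Rightarrow> (nat \<Rightarrow> real) \<Rightarrow> (nat \<Rightarrow> nat) \<Rightarrow> bool" where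
  "valid_msg_seq n R ms \<longleftrightarrow> (\<forall>i\<ge>1. ms i \<in> msgs n (R i))"

definition constrained_code :: "nat \<Rightarrow> nat \<Rightarrow> nat \<Rightarrow> nat \<Rightarrow> (nat \<Rightarrow> real)
    \<Rightarrow> (nat \<Rightarrow> nat \<Rightarrow> bool list \<Rightarrow> bool list) \<Rightarrow> (nat \<Rightarrow> bool list \<Rightarrow> nat) \<Rightarrow> bool" where
  "constrained_code n \<alpha> \<beta> p R E D \<longleftrightarrow> is_code n R E D \<and>
     (\<forall>ms. valid_msg_seq n R ms \<longrightarrow>
        (\<forall>i j. j + \<beta> \<le> n \<longrightarrow>
           card {(k, l). k < \<alpha> \<and> l < \<beta> \<and>
             states n E ms (i + k) ! (j + l) \<noteq> states n E ms (i + k + 1) ! (j + l)} \<le> p))"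

definition code_has_rate :: "(nat \<Rightarrow> real) \<Rightarrow> real \<Rightarrow> bool" where
  "code_has_rate R r \<longleftrightarrow> (\<lambda>m. (\<Sum>i=1..m. R i) / real m) \<longlonglongrightarrow> r"

definition cap_n :: "nat \<Rightarrow> nat \<Rightarrow> nat \<Rightarrow> nat \<Rightarrow> real" where
  "cap_n n \<alpha> \<beta> p = Sup {r. \<exists>R E D. constrained_code n \<alpha> \<beta> p R E D \<and> code_has_rate R r}"

definition is_array :: "nat \<Rightarrow> nat \<Rightarrow> nat \<Rightarrow> nat \<Rightarrow> nat \<Rightarrow> (nat \<Rightarrow> nat \<Rightarrow> bool) \<Rightarrow> bool" where
  "is_array m n a b p A \<longleftrightarrow>
     (\<forall>i j. (m \<le> i \<or> n \<le> j) \<longrightarrow> \<not> A i j) \<and>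
     (\<forall>i j. i + a \<le> m \<and> j + b \<le> n \<longrightarrow>
        card {(k, l). k < a \<and> l < b \<and> A (i + k) (j + l)} \<le> p)"

definition num_arrays :: "nat \<Rightarrow> nat \<Rightarrow> nat \<Rightarrow> nat \<Rightarrow> nat \<Rightarrow> nat" where
  "num_arrays m n a b p = card {A. is_array m n a b p A}"

end

theory Submission
  imports Defs
begin

lemma one_in_msgs: "0 \<le> r \<Longrightarrow> 1 \<in> msgs n r"
proof -
  assume "0 \<le> r"
  hence "1 \<le> 2 powr (real n * r)" by (simp add: ge_one_powr_ge_zero)
  hence "1 \<le> \<lfloor>2 powr (real n * r)\<rfloor>" by linarith
  hence "1 \<le> nat \<lfloor>2 powr (real n * r)\<rfloor>" by linarith
  thus ?thesis unfolding msgs_def by simp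
qed

lemma finite_arrays: "finite {A. is_array m n a b p A}"
proof -
  have "{A. is_array m n a b p A} \<subseteq> (\<lambda>S. \<lambda>i j. (i,j) \<in> S) ` Pow ({..<m} \<times> {..<n})"
  proof
    fix A assume "A \<in> {A. is_array m n a b p A}"
    hence z: "\<And>i j. (m \<le> i \<or> n \<le> j) \<Longrightarrow> \<not> A i j" unfolding is_array_def by blast
    have "A = (\<lambda>i j. (i,j) \<in> {(i,j). A i j \<and> i < m \<and> j < n})"
      using z by (auto simp: fun_eq_iff) (meson not_le)+
    moreover have "{(i,j). A i j \<and> i < m \<and> j < n} \<in> Pow ({..<m} \<times> {..<n})" by auto
    ultimately show "A \<in> (\<lambda>S. \<lambda>i j. (i,j) \<in> S) ` Pow ({..<m} \<times> {..<n})" by blast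
  qed
  thus ?thesis by (rule finite_subset) auto
qed

lemma states_len:
  assumes "is_code n R E D" "valid_msg_seq n R ms"
  shows "length (states n E ms k) = n"
proof (induction k)
  case 0 thus ?case by simp
next
  case (Suc k)
  have "ms (Suc k) \<in> msgs n (R (Suc k))" using assms(2) unfolding valid_msg_seq_def by simp
  thus ?case using assms(1) Suc unfolding is_code_def by simp
qed

lemma states_dec:
  assumes "is_code n R E D" "valid_msg_seq n R ms" "i \<ge> 1"
  shows "D i (states n E ms i) = ms i"
proof -
  obtain k where k: "i = Suc k" using assms(3) by (cases i) auto
  have "ms i \<in> msgs n (R i)" using assms(2,3) unfolding valid_msg_seq_def by simp
  thus ?thesis using assms(1) states_len[OF assms(1,2), of k] k unfolding is_code_def by simp
qed

lemma count_bound: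
  assumes cc: "constrained_code n \<alpha> \<beta> p R E D"
  shows "(\<Prod>i\<in>{1..m}. card (msgs n (R i))) \<le> num_arrays m n \<alpha> \<beta> p"
proof -
  have ic: "is_code n R E D" using cc unfolding constrained_code_def by blast
  define ext where "ext ms = (\<lambda>i. if i \<in> {1..m} then ms i else (1::nat))" for ms :: "nat \<Rightarrow> nat"
  define g where "g ms = (\<lambda>k l. k < m \<and> l < n \<and>
      states n E (ext ms) k ! l \<noteq> states n E (ext ms) (k+1) ! l)" for ms
  let ?P = "Pi\<^sub>E {1..m} (\<lambda>i. msgs n (R i))"
  have valid: "valid_msg_seq n R (ext ms)" if "ms \<in> ?P" for ms
    unfolding valid_msg_seq_def ext_def using that one_in_msgs ic unfolding is_code_def
    by auto
  have img: "g ` ?P \<subseteq> {A. is_array m n \<alpha> \<beta> p A}"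
  proof safe
    fix ms assume ms: "ms \<in> ?P"
    have c: "\<forall>i j. j + \<beta> \<le> n \<longrightarrow>
           card {(k, l). k < \<alpha> \<and> l < \<beta> \<and>
             states n E (ext ms) (i + k) ! (j + l) \<noteq> states n E (ext ms) (i + k + 1) ! (j + l)} \<le> p"
      using cc valid[OF ms] unfolding constrained_code_def by blast
    show "is_array m n \<alpha> \<beta> p (g ms)" unfolding is_array_def
    proof safe
      fix i j assume "m \<le> i" "g ms i j" thus False unfolding g_def by simp
    next
      fix i j assume "n \<le> j" "g ms i j" thus False unfolding g_def by simp
    next
      fix i j assume h: "i + \<alpha> \<le> m" "j + \<beta> \<le> n"
      have "{(k, l). k < \<alpha> \<and> l < \<beta> \<and> g ms (i + k) (j + l)} =
            {(k, l). k < \<alpha> \<and> l < \<beta> \<and>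
             states n E (ext ms) (i + k) ! (j + l) \<noteq> states n E (ext ms) (i + k + 1) ! (j + l)}"
        using h unfolding g_def by auto
      thus "card {(k, l). k < \<alpha> \<and> l < \<beta> \<and> g ms (i + k) (j + l)} \<le> p" using c h by simp
    qed
  qed
  have inj: "inj_on g ?P"
  proof (rule inj_onI)
    fix ms1 ms2 assume m1: "ms1 \<in> ?P" and m2: "ms2 \<in> ?P" and eq: "g ms1 = g ms2"
    have st: "k \<le> m \<Longrightarrow> states n E (ext ms1) k = states n E (ext ms2) k" for k
    proof (induction k)
      case 0 thus ?case by simp
    next
      case (Suc k)
      hence IH: "states n E (ext ms1) k = states n E (ext ms2) k" by simp
      show ?case
      proof (rule nth_equalityI)
        show "length (states n E (ext ms1) (Suc k)) = length (states n E (ext ms2) (Suc k))"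
          using states_len[OF ic valid[OF m1], of "Suc k"] states_len[OF ic valid[OF m2], of "Suc k"] by argo
      next
        fix l assume "l < length (states n E (ext ms1) (Suc k))"
        hence l: "l < n" using states_len[OF ic valid[OF m1], of "Suc k"] by argo
        have "g ms1 k l = g ms2 k l" using eq by simp
        thus "states n E (ext ms1) (Suc k) ! l = states n E (ext ms2) (Suc k) ! l"
          using l Suc.prems IH unfolding g_def by auto
      qed
    qed
    show "ms1 = ms2"
    proof (rule PiE_ext[OF m1 m2])
      fix i assume i: "i \<in> {1..m}"
      have "ext ms1 i = ext ms2 i"
        using states_dec[OF ic valid[OF m1], of i] states_dec[OF ic valid[OF m2], of i] st[of i] i
        by auto
      thus "ms1 i = ms2 i" using i unfolding ext_def by simp
    qed
  qed
  have "card ?P \<le> card {A. is_array m n \<alpha> \<beta> p A}"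
    by (rule card_inj_on_le[OF inj img finite_arrays])
  thus ?thesis unfolding num_arrays_def by (simp add: card_PiE)
qed


lemma card_msgs_ge:
  assumes "0 \<le> r"
  shows "2 powr (real n * r) / 2 \<le> real (card (msgs n r))"
proof -
  let ?x = "2 powr (real n * r)"
  have x1: "1 \<le> ?x" using assms by (simp add: ge_one_powr_ge_zero)
  have "card (msgs n r) = nat \<lfloor>?x\<rfloor>" unfolding msgs_def by simp
  moreover have "?x - 1 < real_of_int \<lfloor>?x\<rfloor>" by linarith
  moreover have "1 \<le> \<lfloor>?x\<rfloor>" using x1 by linarith
  moreover have "real (nat \<lfloor>?x\<rfloor>) = real_of_int \<lfloor>?x\<rfloor>"
    using \<open>1 \<le> \<lfloor>?x\<rfloor>\<close> by (simp add: of_nat_nat)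
  ultimately show ?thesis by linarith
qed

lemma rate_bound:
  assumes cc: "constrained_code n \<alpha> \<beta> p R E D"
  shows "real n * (\<Sum>i=1..m. R i) - real m \<le> log 2 (real (num_arrays m n \<alpha> \<beta> p))"
proof -
  have ic: "is_code n R E D" using cc unfolding constrained_code_def by blast
  have R0: "i \<in> {1..m} \<Longrightarrow> 0 \<le> R i" for i using ic unfolding is_code_def by auto
  have "2 powr (real n * (\<Sum>i=1..m. R i) - real m) = (\<Prod>i\<in>{1..m}. 2 powr (real n * R i) / 2)"
  proof -
    have "2 powr (real n * (\<Sum>i=1..m. R i) - real m) = 2 powr (\<Sum>i=1..m. real n * R i - 1)"
      by (simp add: sum_subtractf sum_distrib_left)
    also have "\<dots> = (\<Prod>i\<in>{1..m}. 2 powr (real n * R i - 1))" by (simp add: powr_sum)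
    also have "\<dots> = (\<Prod>i\<in>{1..m}. 2 powr (real n * R i) / 2)"
      by (simp add: powr_diff)
    finally show ?thesis .
  qed
  also have "\<dots> \<le> (\<Prod>i\<in>{1..m}. real (card (msgs n (R i))))"
    by (rule prod_mono) (use R0 card_msgs_ge in auto)
  also have "\<dots> \<le> real (num_arrays m n \<alpha> \<beta> p)"
    using count_bound[OF cc, of m] by (metis of_nat_le_iff of_nat_prod)
  finally have le: "2 powr (real n * (\<Sum>i=1..m. R i) - real m) \<le> real (num_arrays m n \<alpha> \<beta> p)" .
  have pos: "0 < 2 powr (real n * (\<Sum>i=1..m. R i) - real m)" by simp
  have "real n * (\<Sum>i=1..m. R i) - real m = log 2 (2 powr (real n * (\<Sum>i=1..m. R i) - real m))"
    by simp
  also have "\<dots> \<le> log 2 (real (num_arrays m n \<alpha> \<beta> p))"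
  proof -
    have np: "0 < real (num_arrays m n \<alpha> \<beta> p)" using le pos by linarith
    show ?thesis using log_le_cancel_iff[of 2, OF _ pos np] le by simp
  qed
  finally show ?thesis .
qed

lemma zero_code: "constrained_code n \<alpha> \<beta> p (\<lambda>i. 0) (\<lambda>i m u. u) (\<lambda>i u. 1)
   \<and> code_has_rate (\<lambda>i. 0) 0"
proof -
  have st: "states n (\<lambda>i m u. u) ms k = replicate n False" for ms k by (induction k) auto
  have "msgs n 0 = {1}" unfolding msgs_def by simp
  hence "is_code n (\<lambda>i. 0) (\<lambda>i m u. u) (\<lambda>i u. 1)" unfolding is_code_def by auto
  moreover have "code_has_rate (\<lambda>i. 0) 0" unfolding code_has_rate_def by simp
  ultimately show ?thesis unfolding constrained_code_def by (simp add: st)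
qed

theorem theorem1:
  fixes \<alpha> \<beta> p :: nat and C C2D :: real
  assumes "0 < \<alpha>" and "0 < \<beta>" and "0 < p"
    and "(\<lambda>n. cap_n n \<alpha> \<beta> p) \<longlonglongrightarrow> C"
    and "((\<lambda>(m, n). log 2 (real (num_arrays m n \<alpha> \<beta> p)) / (real m * real n))
           \<longlongrightarrow> C2D) (sequentially \<times>\<^sub>F sequentially)"
  shows "C \<le> C2D"
proof (rule field_le_epsilon)
  fix e :: real assume e: "0 < e"
  let ?f = "\<lambda>(m, n). log 2 (real (num_arrays m n \<alpha> \<beta> p)) / (real m * real n)"
  have "eventually (\<lambda>x. ?f x < C2D + e) (sequentially \<times>\<^sub>F sequentially)"
    using order_tendstoD(2)[OF assms(5)] e by simp
  then obtain N where N: "\<And>m n. m \<ge> N \<Longrightarrow> n \<ge> N \<Longrightarrow> ?f (m, n) < C2D + e"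
    unfolding eventually_prod_sequentially by blast
  have bnd: "cap_n n \<alpha> \<beta> p \<le> C2D + e + 1 / real n" if n: "n \<ge> max N 1" for n
    unfolding cap_n_def
  proof (rule cSup_least)
    show "{r. \<exists>R E D. constrained_code n \<alpha> \<beta> p R E D \<and> code_has_rate R r} \<noteq> {}"
      using zero_code by blast
  next
    fix r assume "r \<in> {r. \<exists>R E D. constrained_code n \<alpha> \<beta> p R E D \<and> code_has_rate R r}"
    then obtain R E D where cc: "constrained_code n \<alpha> \<beta> p R E D" and rt: "code_has_rate R r"
      by blast
    show "r \<le> C2D + e + 1 / real n"
    proof (rule LIMSEQ_le_const2[OF rt[unfolded code_has_rate_def]])
      show "\<exists>M. \<forall>m\<ge>M. (\<Sum>i = 1..m. R i) / real m \<le> C2D + e + 1 / real n"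
      proof (intro exI allI impI)
        fix m assume m: "m \<ge> max N 1"
        have rb: "real n * (\<Sum>i=1..m. R i) - real m \<le> log 2 (real (num_arrays m n \<alpha> \<beta> p))"
          by (rule rate_bound[OF cc])
        have "log 2 (real (num_arrays m n \<alpha> \<beta> p)) / (real m * real n) < C2D + e"
          using N[of m n] m n by simp
        moreover have mn: "0 < real m * real n" using m n by simp
        ultimately have "log 2 (real (num_arrays m n \<alpha> \<beta> p)) < (C2D + e) * (real m * real n)"
          by (simp add: divide_less_eq)
        hence "real n * (\<Sum>i=1..m. R i) < (C2D + e) * (real m * real n) + real m" using rb by simp
        moreover have "(C2D + e + 1 / real n) * real m * real n = (C2D + e) * (real m * real n) + real m"
          using n by (simp add: field_simps)
        ultimately have "(\<Sum>i=1..m. R i) * real n < ((C2D + e + 1 / real n) * real m) * real n"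
          by (simp add: mult.commute)
        hence "(\<Sum>i=1..m. R i) < (C2D + e + 1 / real n) * real m"
          using n by (simp add: mult_less_cancel_right)
        thus "(\<Sum>i = 1..m. R i) / real m \<le> C2D + e + 1 / real n"
          using m by (simp add: divide_le_eq)
      qed
    qed
  qed
  have lim: "(\<lambda>n. C2D + e + 1 / real n) \<longlonglongrightarrow> C2D + e"
    using tendsto_add[OF tendsto_const lim_1_over_n, of "C2D + e"] by simp
  show "C \<le> C2D + e"
    by (rule LIMSEQ_le[OF assms(4) lim]) (use bnd in blast)
qed

end
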